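(* If $\mathbf{T}\sim\mu$, then for every measurable $\phi:\mathcal{C}_f\to[0,\infty)$, \[ \mathbb{E}\sum_{F\in\mathcal{F}_{\mathbf{T}}}\phi(F^{-1},F\mathbf{T})=\mathbb{E}\sum_{F\in\mathcal{F}_{\mathbf{T}}}\phi(F,\mathbf{T}). \]
   Context: $D\subset\mathbb{R}^2$ is a compact convex polygon. A polygonal tessellation of $D$ is a finite subdivision into polygonal cells with disjoint interiors; vertices are cell vertices; edges are line segments contained in cell edges, ending at vertices, with no other vertex between their ends; segments are maximal unions of aligned contiguous edges. A T-vertex lies at the intersection of exactly three edges, two of them aligned. A T-tessellation of $D$ is a polygonal tessellation all of whose vertices other than those of $D$ are T-vertices, with no pair of distinct aligned segments; $\mathcal{T}$ is the set of these (with the hitting $\sigma$-algebra). An internal segment is blocking if it consists of more than one edge. A flip of $T$ is the deletion of an edge at an end of an internal blocking segment, combined with adding a new edge extending the segment that was blocked at the freed vertex up to the next segment; $\mathcal{F}_T$ is the finite set of flips of $T$, $FT$ the resulting tessellation, $F^{-1}\in\mathcal{F}_{FT}$ the reverse flip. $\mathcal{C}_f=\{(F,T):T\in\mathcal{T},F\in\mathcal{F}_T\}$. For a finite set $L$ of lines hitting $D$, $\mathcal{T}(L)$ is the set of T-tessellations whose internal segments are supported exactly by the lines of $L$. With $\mathbf{L}$ the unit-intensity Poisson line process restricted to $D$, $\mu(A)=Z^{-1}\mathbb{E}\sum_{T\in\mathcal{T}(\mathbf{L})}\mathbf{1}_A(T)$, $Z$ a normalizing constant. *)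

theory Defs
  imports "HOL-Analysis.Analysis"
begin

type_synonym pt = "real^2"
(* A T-tessellation is represented by the finite set of its internal segments
   (closed line segments); the boundary of D is implicit. *)
type_synonym tess = "pt set set"

definition seg_ends :: "pt set \<Rightarrow> pt set" where
  "seg_ends s = {x. \<exists>y. x \<noteq> y \<and> s = closed_segment x y}"

definition is_seg :: "pt set \<Rightarrow> bool" where
  "is_seg s \<longleftrightarrow> (\<exists>a b. a \<noteq> b \<and> s = closed_segment a b)"

definition seg_open :: "pt set \<Rightarrow> pt set" where
  "seg_open s = s - seg_ends s"

definition is_line :: "pt set \<Rightarrow> bool" where
  "is_line l \<longleftrightarrow> (\<exists>a b. a \<noteq> b \<and> l = affine hull {a, b})"

definition aligned :: "pt set \<Rightarrow> pt set \<Rightarrow> bool" where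
  "aligned s t \<longleftrightarrow> (\<exists>l. is_line l \<and> s \<subseteq> l \<and> t \<subseteq> l)"

definition convex_polygon :: "pt set \<Rightarrow> bool" where
  "convex_polygon D \<longleftrightarrow> polytope D \<and> interior D \<noteq> {}"

(* T-tessellations of D: internal segments, pairwise non-aligned, no crossings,
   every vertex other than a vertex (corner) of D is a T-vertex. *)
definition is_Ttess :: "pt set \<Rightarrow> tess \<Rightarrow> bool" where
  "is_Ttess D T \<longleftrightarrow> finite T \<and>
     (\<forall>s\<in>T. is_seg s \<and> s \<subseteq> D \<and> seg_open s \<subseteq> interior D) \<and>
     (\<forall>s\<in>T. \<forall>t\<in>T. s \<noteq> t \<longrightarrow> \<not> aligned s t \<and> seg_open s \<inter> seg_open t = {}) \<and>
     (\<forall>s\<in>T. \<forall>p\<in>seg_ends s. \<not> p extreme_point_of D \<longrightarrow>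
          (\<forall>t\<in>T. t \<noteq> s \<longrightarrow> p \<notin> seg_ends t) \<and>
          (p \<in> frontier D \<or> (\<exists>t\<in>T. p \<in> seg_open t)))"

(* A flip is identified by the pair (a, q): a is the end of the blocking segment s
   whose end edge [a,q] is deleted, q the vertex of s next to a, where the segment t
   blocked by s ends. *)
definition is_flip_pair :: "tess \<Rightarrow> pt \<Rightarrow> pt \<Rightarrow> bool" where
  "is_flip_pair T a q \<longleftrightarrow>
     (\<exists>s\<in>T. a \<in> seg_ends s \<and> q \<in> seg_open s) \<and> (\<exists>t\<in>T. q \<in> seg_ends t) \<and>
     (\<forall>t\<in>T. seg_ends t \<inter> open_segment a q = {})"

definition flip_seg :: "tess \<Rightarrow> pt \<Rightarrow> pt \<Rightarrow> pt set" where
  "flip_seg T a q = (THE s. s \<in> T \<and> a \<in> seg_ends s \<and> q \<in> seg_open s)"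

definition blocked_seg :: "tess \<Rightarrow> pt \<Rightarrow> pt set" where
  "blocked_seg T q = (THE t. t \<in> T \<and> q \<in> seg_ends t)"

definition other_end :: "pt set \<Rightarrow> pt \<Rightarrow> pt" where
  "other_end s p = (THE x. x \<in> seg_ends s \<and> x \<noteq> p)"

definition short_seg :: "tess \<Rightarrow> pt \<Rightarrow> pt \<Rightarrow> pt set" where
  "short_seg T a q = closed_segment q (other_end (flip_seg T a q) a)"

definition del_edge :: "tess \<Rightarrow> pt \<Rightarrow> pt \<Rightarrow> tess" where
  "del_edge T a q = (T - {flip_seg T a q}) \<union> {short_seg T a q}"

definition new_end :: "pt set \<Rightarrow> tess \<Rightarrow> pt \<Rightarrow> pt \<Rightarrow> pt" where
  "new_end D T a q =
     (let t = blocked_seg T q; c = other_end t q;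
          u = Inf {u::real. u > 0 \<and>
                 q + u *\<^sub>R (q - c) \<in> frontier D \<union> \<Union>(del_edge T a q - {t})}
      in q + u *\<^sub>R (q - c))"

definition flip_result :: "pt set \<Rightarrow> pt \<times> pt \<Rightarrow> tess \<Rightarrow> tess" where
  "flip_result D F T = (case F of (a, q) \<Rightarrow>
     (del_edge T a q - {blocked_seg T q}) \<union>
       {closed_segment (other_end (blocked_seg T q) q) (new_end D T a q)})"

(* reverse flip F^{-1} \<in> flips of FT *)
definition flip_inv :: "pt set \<Rightarrow> pt \<times> pt \<Rightarrow> tess \<Rightarrow> pt \<times> pt" where
  "flip_inv D F T = (case F of (a, q) \<Rightarrow> (new_end D T a q, q))"

definition flips :: "pt set \<Rightarrow> tess \<Rightarrow> (pt \<times> pt) set" where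
  "flips D T = {(a, q). is_flip_pair T a q \<and> is_Ttess D (flip_result D (a, q) T)}"

definition tess_M :: "pt set \<Rightarrow> tess measure" where
  "tess_M D = sigma {T. is_Ttess D T}
     {{T. is_Ttess D T \<and> (\<Union>T \<union> frontier D) \<inter> K \<noteq> {}} | K. compact K}"

definition Cf :: "pt set \<Rightarrow> ((pt \<times> pt) \<times> tess) set" where
  "Cf D = {(F, T). is_Ttess D T \<and> F \<in> flips D T}"

definition Cf_M :: "pt set \<Rightarrow> ((pt \<times> pt) \<times> tess) measure" where
  "Cf_M D = restrict_space (borel \<Otimes>\<^sub>M tess_M D) (Cf D)"

definition line_of :: "real \<times> real \<Rightarrow> pt set" where
  "line_of tp = {x. x $ 1 * cos (fst tp) + x $ 2 * sin (fst tp) = snd tp}"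

definition Hset :: "pt set \<Rightarrow> (real \<times> real) set" where
  "Hset D = {tp. 0 \<le> fst tp \<and> fst tp < pi \<and> line_of tp \<inter> D \<noteq> {}}"

(* E h(L) for L the unit-intensity Poisson line process restricted to D
   (intensity d theta dp on lines hitting D) *)
definition PLP_expect :: "pt set \<Rightarrow> (pt set set \<Rightarrow> ennreal) \<Rightarrow> ennreal" where
  "PLP_expect D h = ennreal (exp (- measure lborel (Hset D))) *
     (\<Sum>n. ennreal (1 / fact n) *
        (\<integral>\<^sup>+ f. h ((\<lambda>i. line_of (f i)) ` {..<n})
           \<partial>(PiM {..<n} (\<lambda>_. restrict_space lborel (Hset D)))))"

definition supported_by :: "pt set set \<Rightarrow> tess \<Rightarrow> bool" where
  "supported_by L T \<longleftrightarrow> (\<forall>s\<in>T. \<exists>l\<in>L. s \<subseteq> l) \<and> (\<forall>l\<in>L. \<exists>s\<in>T. s \<subseteq> l)"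

definition TL :: "pt set \<Rightarrow> pt set set \<Rightarrow> tess set" where
  "TL D L = {T. is_Ttess D T \<and> supported_by L T}"

definition Zc :: "pt set \<Rightarrow> ennreal" where
  "Zc D = PLP_expect D (\<lambda>L. of_nat (card (TL D L)))"

(* expectation of g(T) for T ~ mu, mu(A) = Z^{-1} E sum_{T in T(L)} 1_A(T) *)
definition mu_expect :: "pt set \<Rightarrow> (tess \<Rightarrow> ennreal) \<Rightarrow> ennreal" where
  "mu_expect D g = PLP_expect D (\<lambda>L. \<Sum>T\<in>TL D L. g T) / Zc D"

end

theory Submission
  imports Defs
begin


lemma seg_ends_cs: "a \<noteq> b \<Longrightarrow> seg_ends (closed_segment a b) = {a,b}"
  unfolding seg_ends_def by (auto simp: doubleton_eq_iff)

lemma seg_open_cs: "a \<noteq> b \<Longrightarrow> seg_open (closed_segment a b) = open_segment a b"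
  by (simp add: seg_open_def seg_ends_cs open_segment_def)

lemma other_end_cs: "a \<noteq> b \<Longrightarrow> other_end (closed_segment a b) a = b"
  unfolding other_end_def seg_ends_cs by auto

lemma seg_in_affine:
  assumes "x \<noteq> y" "x \<in> closed_segment c d" "y \<in> closed_segment c d"
  shows "closed_segment c d \<subseteq> affine hull {x,y}"
proof
  fix z assume z: "z \<in> closed_segment c d"
  have "collinear {x,y,z}"
    by (rule collinear_subset[OF collinear_closed_segment]) (use assms z in auto)
  thus "z \<in> affine hull {x,y}" using collinear_3_affine_hull assms(1) by blast
qed

lemma is_seg_E: assumes "is_seg w" "p \<in> seg_ends w"
  shows "other_end w p \<noteq> p \<and> w = closed_segment p (other_end w p) \<and> seg_ends w = {p, other_end w p}"
proof -
  obtain x y where xy: "x \<noteq> y" "w = closed_segment x y" using assms(1) is_seg_def by auto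
  show ?thesis
  proof (cases "p = x")
    case True thus ?thesis using xy other_end_cs seg_ends_cs by auto
  next
    case False
    hence "p = y" using assms(2) xy seg_ends_cs by auto
    thus ?thesis using xy other_end_cs[of y x] seg_ends_cs[of y x] by (auto simp: closed_segment_commute)
  qed
qed

lemma aligned_I:
  assumes "x \<noteq> y" "is_seg s" "is_seg w" "x \<in> s" "y \<in> s" "x \<in> w" "y \<in> w"
  shows "aligned s w"
proof -
  obtain a b where s: "s = closed_segment a b" using assms is_seg_def by auto
  obtain c d where w: "w = closed_segment c d" using assms is_seg_def by auto
  show ?thesis unfolding aligned_def is_line_def
    using seg_in_affine[of x y a b] seg_in_affine[of x y c d] assms s w by blast
qed

lemma ends_sub: "seg_ends w \<subseteq> w"
  unfolding seg_ends_def by auto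
lemma open_sub: "seg_open w \<subseteq> w"
  unfolding seg_open_def by auto

lemma affine_line_of: "affine (line_of tp)"
  unfolding affine_def line_of_def
proof (intro ballI allI impI, simp)
  fix x y :: pt and u v :: real
  assume h: "x $ 1 * cos (fst tp) + x $ 2 * sin (fst tp) = snd tp"
     "y $ 1 * cos (fst tp) + y $ 2 * sin (fst tp) = snd tp" "u + v = 1"
  have "u * (x $ 1 * cos (fst tp) + x $ 2 * sin (fst tp)) + v * (y $ 1 * cos (fst tp) + y $ 2 * sin (fst tp)) = snd tp"
    using h by (simp add: distrib_right[symmetric])
  thus "(u * x $ 1 + v * y $ 1) * cos (fst tp) + (u * x $ 2 + v * y $ 2) * sin (fst tp) = snd tp"
    by (simp add: algebra_simps)
qed

lemma Ttess_D: assumes "is_Ttess D T"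
  shows "finite T" "\<And>w. w \<in> T \<Longrightarrow> is_seg w" "\<And>w. w \<in> T \<Longrightarrow> seg_open w \<subseteq> interior D"
   "\<And>w v. w \<in> T \<Longrightarrow> v \<in> T \<Longrightarrow> w \<noteq> v \<Longrightarrow> \<not> aligned w v"
   "\<And>w v. w \<in> T \<Longrightarrow> v \<in> T \<Longrightarrow> w \<noteq> v \<Longrightarrow> seg_open w \<inter> seg_open v = {}"
   "\<And>w v p. w \<in> T \<Longrightarrow> p \<in> seg_ends w \<Longrightarrow> \<not> p extreme_point_of D \<Longrightarrow> v \<in> T \<Longrightarrow> v \<noteq> w \<Longrightarrow> p \<notin> seg_ends v"
   "\<And>w p. w \<in> T \<Longrightarrow> p \<in> seg_ends w \<Longrightarrow> \<not> p extreme_point_of D \<Longrightarrow> p \<in> frontier D \<or> (\<exists>v\<in>T. p \<in> seg_open v)"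
  using assms unfolding is_Ttess_def by (meson)+

lemma ray_hits_frontier:
  assumes "compact D" "q \<in> interior D" "(e::pt) \<noteq> 0"
  shows "\<exists>u>0. q + u *\<^sub>R e \<in> frontier D"
proof -
  obtain M where M: "\<And>x. x \<in> D \<Longrightarrow> norm x \<le> M"
    using compact_imp_bounded[OF assms(1)] unfolding bounded_iff by blast
  define u where "u = (M + norm q + 1) / norm e"
  have ne: "norm e > 0" using assms by simp
  have nq: "norm q \<le> M" using M assms(2) interior_subset by blast
  hence upos: "u > 0" using ne unfolding u_def by (smt (verit) divide_pos_pos norm_ge_zero)
  define p where "p = q + u *\<^sub>R e"
  have "norm (u *\<^sub>R e) = M + norm q + 1" proof -
    have pos: "0 < M + norm q + 1" using nq norm_ge_zero[of q] by linarith
    show ?thesis using ne pos unfolding u_def by simp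
  qed
  moreover have "norm (u *\<^sub>R e) \<le> norm p + norm q" unfolding p_def
    by (metis add_diff_cancel_left' norm_triangle_ineq4 add.commute)
  ultimately have "norm p > M" by linarith
  hence pD: "p \<notin> D" using M by (meson not_le)
  have "closed_segment q p \<inter> frontier D \<noteq> {}"
    apply (rule connected_Int_frontier)
    using pD assms(2) interior_subset by auto
  then obtain z where z: "z \<in> closed_segment q p" "z \<in> frontier D" by blast
  then obtain v where v: "0 \<le> v" "v \<le> 1" "z = (1 - v) *\<^sub>R q + v *\<^sub>R p" using in_segment(1) by blast
  have zq: "z = q + (v * u) *\<^sub>R e" using v(3) unfolding p_def by (simp add: algebra_simps)
  have "z \<noteq> q" using z(2) assms(2) by (auto simp: frontier_def)
  hence "v * u \<noteq> 0" using zq by auto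
  hence "v * u > 0" using v upos by (simp add: less_le)
  thus ?thesis using z(2) zq by blast
qed



lemma flip_main:
  assumes Dp: "convex_polygon D" and TT: "is_Ttess D T" and F: "(a,q) \<in> flips D T"
  shows "flip_inv D (a,q) T \<in> flips D (flip_result D (a,q) T)
    \<and> flip_result D (flip_inv D (a,q) T) (flip_result D (a,q) T) = T
    \<and> flip_inv D (flip_inv D (a,q) T) (flip_result D (a,q) T) = (a,q)
    \<and> (\<forall>L. supported_by L T \<longrightarrow> (\<forall>l\<in>L. affine l) \<longrightarrow> supported_by L (flip_result D (a,q) T))"
proof -
  define FT where "FT = flip_result D (a,q) T"
  have fp: "is_flip_pair T a q" and FTT: "is_Ttess D FT" using F unfolding flips_def FT_def by auto
  have cD: "compact D" using Dp unfolding convex_polygon_def by (simp add: polytope_imp_compact)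
  hence clD: "closed D" by (simp add: compact_imp_closed)
  note TD = Ttess_D[OF TT] and FD = Ttess_D[OF FTT]
  obtain s where s: "s \<in> T" "a \<in> seg_ends s" "q \<in> seg_open s" using fp is_flip_pair_def by blast
  obtain t where t: "t \<in> T" "q \<in> seg_ends t" using fp is_flip_pair_def by blast
  have qint: "q \<in> interior D" using s TD(3) by blast
  have qne: "\<not> q extreme_point_of D" using qint extreme_point_not_in_interior by blast
  have aq: "a \<noteq> q" using s unfolding seg_open_def by auto
  have fs: "flip_seg T a q = s" unfolding flip_seg_def
  proof (rule the_equality)
    show "s \<in> T \<and> a \<in> seg_ends s \<and> q \<in> seg_open s" using s by auto
    fix w assume w: "w \<in> T \<and> a \<in> seg_ends w \<and> q \<in> seg_open w"
    show "w = s"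
    proof (rule ccontr)
      assume "w \<noteq> s"
      moreover have "aligned w s" using aligned_I[OF aq, of w s] w s TD(2) ends_sub open_sub by blast
      ultimately show False using TD(4) w s by blast
    qed
  qed
  define b where "b = other_end s a"
  have sE: "b \<noteq> a" "s = closed_segment a b" "seg_ends s = {a,b}"
    using is_seg_E[OF TD(2)[OF s(1)] s(2)] unfolding b_def by auto
  have so: "seg_open s = open_segment a b" using sE seg_open_cs by metis
  have qb: "q \<noteq> b" using s(3) sE unfolding seg_open_def by auto
  have bs: "blocked_seg T q = t" unfolding blocked_seg_def
  proof (rule the_equality)
    show "t \<in> T \<and> q \<in> seg_ends t" using t by auto
    fix w assume "w \<in> T \<and> q \<in> seg_ends w"
    thus "w = t" using TD(6)[OF t(1) t(2) qne] by blast
  qed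
  define c where "c = other_end t q"
  have tE: "c \<noteq> q" "t = closed_segment q c" "seg_ends t = {q,c}"
    using is_seg_E[OF TD(2)[OF t(1)] t(2)] unfolding c_def by auto
  have st: "s \<noteq> t" using s t unfolding seg_open_def by auto
  have ss: "short_seg T a q = closed_segment q b" unfolding short_seg_def fs b_def ..
  have de: "del_edge T a q = (T - {s}) \<union> {closed_segment q b}" unfolding del_edge_def fs ss ..
  have qbs: "closed_segment q b \<subseteq> s"
  proof -
    have "q \<in> s" using s(3) open_sub by blast
    moreover have "b \<in> s" using sE ends_sub by blast
    ultimately show ?thesis using sE(2) by (metis closed_segment_subset convex_closed_segment)
  qed
  have qbT: "closed_segment q b \<notin> T"
  proof
    assume h: "closed_segment q b \<in> T"
    have "closed_segment q b \<noteq> s" using seg_ends_cs[OF qb] sE s(3) unfolding seg_open_def by auto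
    moreover have "aligned (closed_segment q b) s"
      using aligned_I[OF qb, of "closed_segment q b" s] qbs TD(2)[OF h] TD(2)[OF s(1)] by auto
    ultimately show False using TD(4)[OF h s(1)] by blast
  qed
  have qbt: "closed_segment q b \<noteq> t" using qbT t by auto
  define U where "U = {u::real. u > 0 \<and> q + u *\<^sub>R (q - c) \<in> frontier D \<union> \<Union>(del_edge T a q - {t})}"
  define u0 where "u0 = Inf U"
  define r where "r = q + u0 *\<^sub>R (q - c)"
  have ne: "new_end D T a q = r" unfolding new_end_def Let_def bs c_def[symmetric] r_def u0_def U_def ..
  have FT: "FT = (del_edge T a q - {t}) \<union> {closed_segment c r}"
    by (simp add: FT_def flip_result_def bs c_def ne)
  have d0: "q - c \<noteq> 0" using tE by simp
  have Une: "U \<noteq> {}"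
    using ray_hits_frontier[OF cD qint d0] unfolding U_def by blast
  have bdd: "bdd_below U" unfolding U_def by (rule bdd_belowI[of _ 0]) auto
  have u0ge: "u0 \<ge> 0" unfolding u0_def using Une by (rule cInf_greatest) (auto simp: U_def)
  have notU: "\<And>u. 0 < u \<Longrightarrow> u < u0 \<Longrightarrow> q + u *\<^sub>R (q - c) \<notin> frontier D \<union> \<Union>(del_edge T a q - {t})"
  proof -
    fix u :: real assume "0 < u" "u < u0"
    moreover have "u \<in> U \<Longrightarrow> u0 \<le> u" unfolding u0_def using bdd by (simp add: cInf_lower)
    ultimately show "q + u *\<^sub>R (q - c) \<notin> frontier D \<union> \<Union>(del_edge T a q - {t})" unfolding U_def by auto
  qed
  have u0pos: "u0 > 0"
  proof (rule ccontr)
    assume "\<not> u0 > 0"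
    hence "r = q" using u0ge unfolding r_def by simp
    hence "closed_segment c r = t" using tE by (simp add: closed_segment_commute)
    hence inFT: "t \<in> FT" "closed_segment q b \<in> FT" unfolding FT de using qbt by auto
    have "q \<in> seg_ends (closed_segment q b)" using seg_ends_cs[OF qb] by auto
    from FD(6)[OF inFT(2) this qne inFT(1)] qbt tE show False by auto
  qed
  have rq: "r \<noteq> q" using u0pos d0 unfolding r_def by simp
  have rc_eq: "r - c = (1 + u0) *\<^sub>R (q - c)" unfolding r_def by (simp add: algebra_simps)
  have rc: "r \<noteq> c" using rc_eq u0pos d0 by (metis add_pos_pos diff_self less_numeral_extra(1) scaleR_eq_0_iff less_irrefl)
  have qo: "q \<in> open_segment c r"
  proof -
    define v where "v = 1 / (1 + u0)"
    have "(1 - v) *\<^sub>R c + v *\<^sub>R r = c + v *\<^sub>R (r - c)" by (simp add: algebra_simps)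
    also have "\<dots> = q" using u0pos by (simp add: rc_eq v_def)
    finally have "q = (1 - v) *\<^sub>R c + v *\<^sub>R r" ..
    moreover have "0 < v" "v < 1" using u0pos unfolding v_def by auto
    ultimately show ?thesis using rc in_segment(2) by (metis)
  qed

  define t' where "t' = closed_segment c r"
  have t'E: "seg_ends t' = {c,r}" "seg_open t' = open_segment c r" "t' = closed_segment r c"
    using seg_ends_cs[OF rc[symmetric]] seg_open_cs[OF rc[symmetric]] unfolding t'_def
    by (auto simp: closed_segment_commute)
  have qt': "q \<in> t'" using qo unfolding t'_def by (simp add: open_closed_segment)
  have ct': "c \<in> t'" unfolding t'_def by simp
  have t'T: "t' \<notin> T"
  proof
    assume h: "t' \<in> T"
    show False
    proof (cases "t' = t")
      case True
      hence "{c,r} = {c,q}" using t'E tE by (simp add: insert_commute)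
      thus False using rq rc by (auto simp: doubleton_eq_iff)
    next
      case False
      have "aligned t t'" using aligned_I[OF tE(1), of t t'] TD(2)[OF t(1)] TD(2)[OF h] qt' ct' tE(2) by auto
      thus False using TD(4)[OF t(1) h] False by auto
    qed
  qed
  have t'qb: "t' \<noteq> closed_segment q b"
  proof
    assume h: "t' = closed_segment q b"
    hence "c \<in> s" using ct' qbs by blast
    moreover have "q \<in> s" using s(3) open_sub by blast
    ultimately have "aligned t s" using aligned_I[OF tE(1), of t s] TD(2)[OF t(1)] TD(2)[OF s(1)] tE(2) by auto
    thus False using TD(4)[OF t(1) s(1)] st by auto
  qed
  have FTm: "\<And>w. w \<in> FT \<longleftrightarrow> (w \<in> T \<and> w \<noteq> s \<and> w \<noteq> t) \<or> w = closed_segment q b \<or> w = t'"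
    unfolding FT de t'_def[symmetric] using qbt by auto
  have t'FT: "t' \<in> FT" and qbFT: "closed_segment q b \<in> FT" using FTm by auto
  have qend: "q \<in> seg_ends (closed_segment q b)" using seg_ends_cs[OF qb] by auto
  have fp2: "is_flip_pair FT r q"
    unfolding is_flip_pair_def
  proof (intro conjI ballI)
    show "\<exists>s\<in>FT. r \<in> seg_ends s \<and> q \<in> seg_open s" using t'FT t'E qo by auto
    show "\<exists>t\<in>FT. q \<in> seg_ends t" using qbFT qend by auto
    fix w assume w: "w \<in> FT"
    show "seg_ends w \<inter> open_segment r q = {}"
    proof (rule ccontr)
      assume "seg_ends w \<inter> open_segment r q \<noteq> {}"
      then obtain x where x: "x \<in> seg_ends w" "x \<in> open_segment r q" by blast
      then obtain v where v: "0 < v" "v < 1" "x = (1 - v) *\<^sub>R r + v *\<^sub>R q" using in_segment(2) by blast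
      define u where "u = (1 - v) * u0"
      have xu: "x = q + u *\<^sub>R (q - c)" unfolding v(3) u_def r_def by (simp add: algebra_simps)
      have u: "0 < u" "u < u0" unfolding u_def using v u0pos by auto
      show False
      proof (cases "w = t'")
        case True
        hence "x = c \<or> x = r" using x t'E by auto
        thus False
        proof
          assume "x = c"
          hence "(1 + u) *\<^sub>R (q - c) = 0" using xu by (simp add: algebra_simps)
          moreover have "1 + u \<noteq> 0" using u by simp
          ultimately show False using d0 by simp
        next
          assume "x = r"
          hence "(u0 - u) *\<^sub>R (q - c) = 0" using xu unfolding r_def by (simp add: algebra_simps)
          thus False using d0 u by simp
        qed
      next
        case False
        hence "(w \<in> T \<and> w \<noteq> s \<and> w \<noteq> t) \<or> w = closed_segment q b" using w FTm by blast
        hence "w \<in> del_edge T a q - {t}" unfolding de using qbt by blast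
        hence "x \<in> \<Union>(del_edge T a q - {t})" using x ends_sub by blast
        thus False using notU[OF u] xu by auto
      qed
    qed
  qed

  have fs2: "flip_seg FT r q = t'" unfolding flip_seg_def
  proof (rule the_equality)
    show "t' \<in> FT \<and> r \<in> seg_ends t' \<and> q \<in> seg_open t'" using t'FT t'E qo by auto
    fix w assume w: "w \<in> FT \<and> r \<in> seg_ends w \<and> q \<in> seg_open w"
    show "w = t'"
    proof (rule ccontr)
      assume "w \<noteq> t'"
      moreover have "r \<in> t'" "q \<in> t'" using t'E qt' ends_sub by auto
      moreover have "aligned w t'" using aligned_I[OF rq, of w t'] w FD(2) t'FT ends_sub open_sub
        \<open>r \<in> t'\<close> qt' by blast
      ultimately show False using FD(4) w t'FT by blast
    qed
  qed
  have oe2: "other_end t' r = c" using other_end_cs[OF rc] t'E(3) by simp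
  have ss2: "short_seg FT r q = t" unfolding short_seg_def fs2 oe2 using tE(2) by simp
  have bs2: "blocked_seg FT q = closed_segment q b" unfolding blocked_seg_def
  proof (rule the_equality)
    show "closed_segment q b \<in> FT \<and> q \<in> seg_ends (closed_segment q b)" using qbFT qend by auto
    fix w assume "w \<in> FT \<and> q \<in> seg_ends w"
    thus "w = closed_segment q b" using FD(6)[OF qbFT qend qne] by blast
  qed
  have oe3: "other_end (closed_segment q b) q = b" using other_end_cs[OF qb] .
  have de2: "del_edge FT r q - {blocked_seg FT q} = T - {s}"
  proof -
    have "del_edge FT r q = (FT - {t'}) \<union> {t}" unfolding del_edge_def fs2 ss2 ..
    hence "\<And>w. w \<in> del_edge FT r q - {closed_segment q b} \<longleftrightarrow> w \<in> T - {s}"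
      using FTm qbT st t(1) t'T qbt t'qb by auto
    thus ?thesis unfolding bs2 by blast
  qed
  obtain mu where mu: "0 < mu" "mu < 1" "q = (1 - mu) *\<^sub>R a + mu *\<^sub>R b"
    using s(3) unfolding so in_segment(2) by blast
  define lam where "lam = mu / (1 - mu)"
  have lam: "lam > 0" unfolding lam_def using mu by simp
  have e_eq: "q - b = (1 - mu) *\<^sub>R (a - b)" unfolding mu(3) by (simp add: algebra_simps)
  have a_eq: "a = q + lam *\<^sub>R (q - b)"
  proof -
    have "lam * (1 - mu) = mu" unfolding lam_def using mu by simp
    hence "q + lam *\<^sub>R (q - b) = q + mu *\<^sub>R (a - b)" unfolding e_eq by (simp add: scaleR_scaleR)
    also have "\<dots> = a" unfolding mu(3) by (simp add: algebra_simps)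
    finally show ?thesis ..
  qed
  define U1 where "U1 = {u::real. u > 0 \<and> q + u *\<^sub>R (q - b) \<in> frontier D \<union> \<Union>(T - {s})}"
  have lamU: "lam \<in> U1"
  proof -
    have "a \<in> frontier D \<or> (\<exists>w\<in>T - {s}. a \<in> w)"
    proof (cases "a extreme_point_of D")
      case True
      hence "a \<in> D" "a \<notin> interior D" using extreme_point_not_in_interior extreme_point_of_def by auto
      thus ?thesis using clD by (simp add: frontier_def closure_closed)
    next
      case False
      from TD(7)[OF s(1) s(2) False] show ?thesis
      proof
        assume "\<exists>v\<in>T. a \<in> seg_open v"
        then obtain v where v: "v \<in> T" "a \<in> seg_open v" by blast
        have "v \<noteq> s" using v(2) s(2) unfolding seg_open_def by auto
        thus ?thesis using v open_sub by blast
      qed simp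
    qed
    thus ?thesis unfolding U1_def using lam a_eq[symmetric] by auto
  qed
  have lam_min: "\<And>u. u \<in> U1 \<Longrightarrow> lam \<le> u"
  proof (rule ccontr)
    fix u assume uU: "u \<in> U1" and "\<not> lam \<le> u"
    hence u: "0 < u" "u < lam" unfolding U1_def by auto
    define x where "x = q + u *\<^sub>R (q - b)"
    have x1: "x \<in> open_segment a q"
    proof -
      define v where "v = u / lam"
      have v: "0 < v" "v < 1" unfolding v_def using u lam by auto
      have "(1 - v) *\<^sub>R q + v *\<^sub>R a = q + (v * lam) *\<^sub>R (q - b)"
        unfolding a_eq by (simp add: algebra_simps)
      also have "v * lam = u" unfolding v_def using lam by simp
      finally have "x = (1 - v) *\<^sub>R q + v *\<^sub>R a" unfolding x_def by simp
      hence "x \<in> open_segment q a" using v aq in_segment(2) by metis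
      thus ?thesis by (simp add: open_segment_commute)
    qed
    have x2: "x \<in> seg_open s"
    proof -
      define k where "k = mu - u * (1 - mu)"
      have p1: "u * (1 - mu) > 0" using u mu by simp
      have p2: "u * (1 - mu) < mu" using u(2) mu unfolding lam_def by (simp add: field_simps)
      have k: "0 < k" "k < 1" unfolding k_def using p1 p2 mu by auto
      have "x = (1 - k) *\<^sub>R a + k *\<^sub>R b" unfolding x_def e_eq k_def mu(3)
        by (simp add: algebra_simps)
      thus ?thesis unfolding so using k sE(1) in_segment(2) by metis
    qed
    have "x \<in> frontier D \<or> (\<exists>w\<in>T - {s}. x \<in> w)" using uU unfolding U1_def x_def by auto
    thus False
    proof
      assume "x \<in> frontier D"
      moreover have "x \<in> interior D" using x2 TD(3)[OF s(1)] by blast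
      ultimately show False by (simp add: frontier_def)
    next
      assume "\<exists>w\<in>T - {s}. x \<in> w"
      then obtain w where w: "w \<in> T" "w \<noteq> s" "x \<in> w" by blast
      show False
      proof (cases "x \<in> seg_ends w")
        case True
        thus False using fp x1 w(1) unfolding is_flip_pair_def by blast
      next
        case False
        hence "x \<in> seg_open w" using w(3) unfolding seg_open_def by blast
        thus False using TD(5)[OF w(1) s(1) w(2)] x2 by blast
      qed
    qed
  qed
  have ne2: "new_end D FT r q = a"
  proof -
    have "Inf U1 = lam" using lamU lam_min by (rule cInf_eq_minimum)
    hence "new_end D FT r q = q + lam *\<^sub>R (q - b)"
      using de2 by (simp add: new_end_def Let_def bs2 oe3 U1_def)
    thus ?thesis using a_eq by simp
  qed

  have fi: "flip_inv D (a,q) T = (r,q)" by (simp add: flip_inv_def ne)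
  have fr2: "flip_result D (r,q) FT = T"
  proof -
    have "flip_result D (r,q) FT = (T - {s}) \<union> {closed_segment b a}"
      unfolding flip_result_def using de2 by (simp add: bs2 oe3 ne2)
    also have "closed_segment b a = s" using sE(2) by (simp add: closed_segment_commute)
    finally show ?thesis using s(1) by blast
  qed
  have fi2: "flip_inv D (r,q) FT = (a,q)" by (simp add: flip_inv_def ne2)
  have sup: "supported_by L FT" if sL: "supported_by L T" and aff: "\<forall>l\<in>L. affine l" for L
  proof -
    have t'l: "t' \<subseteq> l" if "t \<subseteq> l" "l \<in> L" for l
    proof -
      have cl: "c \<in> l" "q \<in> l" using that(1) tE(2) by auto
      have "r = (1 + u0) *\<^sub>R q + (- u0) *\<^sub>R c" unfolding r_def by (simp add: algebra_simps)
      hence "r \<in> l" using aff that(2) cl unfolding affine_def by (metis add_diff_cancel_left' diff_add_cancel uminus_add_conv_diff add.commute)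
      thus ?thesis unfolding t'_def using cl aff that(2) affine_imp_convex closed_segment_subset by metis
    qed
    show ?thesis unfolding supported_by_def
    proof (intro conjI ballI)
      fix w assume w: "w \<in> FT"
      show "\<exists>l\<in>L. w \<subseteq> l"
      proof -
        obtain ls where ls: "ls \<in> L" "s \<subseteq> ls" using sL s(1) unfolding supported_by_def by blast
        obtain lt where lt: "lt \<in> L" "t \<subseteq> lt" using sL t(1) unfolding supported_by_def by blast
        have "(w \<in> T \<and> w \<noteq> s \<and> w \<noteq> t) \<or> w = closed_segment q b \<or> w = t'" using w FTm by blast
        thus ?thesis
        proof (elim disjE)
          assume "w \<in> T \<and> w \<noteq> s \<and> w \<noteq> t"
          thus ?thesis using sL unfolding supported_by_def by blast
        next
          assume "w = closed_segment q b"
          thus ?thesis using ls qbs by blast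
        next
          assume "w = t'"
          thus ?thesis using lt t'l by blast
        qed
      qed
    next
      fix l assume l: "l \<in> L"
      then obtain w where w: "w \<in> T" "w \<subseteq> l" using sL unfolding supported_by_def by blast
      show "\<exists>w\<in>FT. w \<subseteq> l"
      proof -
        consider "w = s" | "w = t" | "w \<in> T \<and> w \<noteq> s \<and> w \<noteq> t" using w by blast
        thus ?thesis
        proof cases
          case 1 thus ?thesis using w qbs qbFT by blast
        next
          case 2 thus ?thesis using w t'FT t'l[OF _ l] by blast
        next
          case 3 hence "w \<in> FT" using FTm by blast
          thus ?thesis using w by blast
        qed
      qed
    qed
  qed
  have "(r,q) \<in> flips D FT" unfolding flips_def using fp2 fr2 TT by simp
  thus ?thesis using fi fr2 fi2 sup unfolding FT_def by simp
qed


lemma seg_ends_finite: "is_seg w \<Longrightarrow> finite (seg_ends w)"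
  unfolding is_seg_def using seg_ends_cs by auto

lemma flips_finite: assumes "is_Ttess D T" shows "finite (flips D T)"
proof -
  let ?E = "\<Union>(seg_ends ` T)"
  have "finite ?E"
  proof (rule finite_Union)
    show "finite (seg_ends ` T)" using Ttess_D(1)[OF assms] by simp
    fix M assume "M \<in> seg_ends ` T"
    then obtain w where "w \<in> T" "M = seg_ends w" by blast
    thus "finite M" using Ttess_D(2)[OF assms] seg_ends_finite by blast
  qed
  moreover have "flips D T \<subseteq> ?E \<times> ?E"
  proof
    fix x assume "x \<in> flips D T"
    then obtain a q where x: "x = (a,q)" "is_flip_pair T a q" unfolding flips_def by blast
    obtain s where "s \<in> T" "a \<in> seg_ends s" using x(2) unfolding is_flip_pair_def by blast
    moreover obtain t where "t \<in> T" "q \<in> seg_ends t" using x(2) unfolding is_flip_pair_def by blast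
    ultimately show "x \<in> ?E \<times> ?E" using x(1) by blast
  qed
  ultimately show ?thesis by (meson finite_SigmaI finite_subset)
qed

lemma pointwise:
  fixes g :: "(pt \<times> pt) \<times> tess \<Rightarrow> ennreal"
  assumes Dp: "convex_polygon D" and aff: "\<forall>l\<in>L. affine l"
  shows "(\<Sum>T\<in>TL D L. \<Sum>F\<in>flips D T. g (flip_inv D F T, flip_result D F T))
       = (\<Sum>T\<in>TL D L. \<Sum>F\<in>flips D T. g (F, T))"
proof (cases "finite (TL D L)")
  case False thus ?thesis by simp
next
  case fin: True
  have finF: "\<And>T. T \<in> TL D L \<Longrightarrow> finite (flips D T)" using flips_finite unfolding TL_def by blast
  define S where "S = Sigma (TL D L) (flips D)"
  define G where "G = (\<lambda>(T::tess, F::pt\<times>pt). (flip_result D F T, flip_inv D F T))"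
  have GS: "G x \<in> S \<and> G (G x) = x" if x: "x \<in> S" for x
  proof -
    obtain T a q where xe: "x = (T, (a,q))" by (metis prod.collapse)
    have T: "is_Ttess D T" "supported_by L T" "(a,q) \<in> flips D T" using x unfolding S_def TL_def xe by auto
    note m = flip_main[OF Dp T(1) T(3)]
    have FT: "is_Ttess D (flip_result D (a,q) T)" using T(3) unfolding flips_def by auto
    have Gx: "G x = (flip_result D (a,q) T, flip_inv D (a,q) T)" unfolding G_def xe by simp
    have "G x \<in> S" unfolding Gx S_def TL_def using m T(2) aff FT by blast
    moreover have "G (G x) = x" unfolding Gx xe G_def using m by simp
    ultimately show ?thesis by blast
  qed
  have bij: "bij_betw G S S"
    by (rule bij_betw_byWitness[where f'=G]) (use GS in auto)
  have "(\<Sum>T\<in>TL D L. \<Sum>F\<in>flips D T. g (flip_inv D F T, flip_result D F T))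
      = (\<Sum>x\<in>S. (\<lambda>(T,F). g (F,T)) (G x))"
    unfolding S_def G_def using fin finF by (subst sum.Sigma) (auto simp: case_prod_beta)
  also have "\<dots> = (\<Sum>x\<in>S. (\<lambda>(T,F). g (F,T)) x)" using sum.reindex_bij_betw[OF bij] .
  also have "\<dots> = (\<Sum>T\<in>TL D L. \<Sum>F\<in>flips D T. g (F, T))"
    unfolding S_def using fin finF by (subst sum.Sigma) auto
  finally show ?thesis .
qed

theorem corollary3:
  fixes D :: "pt set" and \<phi> :: "(pt \<times> pt) \<times> tess \<Rightarrow> real"
  assumes "convex_polygon D"
    and "\<phi> \<in> borel_measurable (Cf_M D)"
    and "\<forall>x\<in>Cf D. 0 \<le> \<phi> x"
  shows "mu_expect D (\<lambda>T. \<Sum>F\<in>flips D T. ennreal (\<phi> (flip_inv D F T, flip_result D F T)))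
       = mu_expect D (\<lambda>T. \<Sum>F\<in>flips D T. ennreal (\<phi> (F, T)))"
proof -
  have eq: "\<And>n (f :: nat \<Rightarrow> real \<times> real).
     (\<Sum>T\<in>TL D ((\<lambda>i. line_of (f i)) ` {..<n}). \<Sum>F\<in>flips D T. ennreal (\<phi> (flip_inv D F T, flip_result D F T)))
   = (\<Sum>T\<in>TL D ((\<lambda>i. line_of (f i)) ` {..<n}). \<Sum>F\<in>flips D T. ennreal (\<phi> (F, T)))"
    by (rule pointwise[OF assms(1)]) (auto simp: affine_line_of)
  show ?thesis unfolding mu_expect_def PLP_expect_def eq ..
qed

end
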